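(* Let $b\ge3$, $D\subset\{0,\dots,b-1\}$ with $0\in D$ and $2\le|D|<b$, and list $\mathcal C=\mathcal C_{b,D}$ increasingly as $k_1<k_2<\cdots$. Then for every $q\in\mathbb N$, $$\lim_{N\to\infty}\frac1N\#\{n\le N: k_n\equiv 0\pmod q\}$$ exists and is strictly positive.
   Context: $\mathcal C_{b,D}=\{\sum_{j=0}^{k} d_j b^j : k\in\mathbb N_0,\ d_j\in D\}$. *)

theory Defs
  imports "HOL-Analysis.Analysis" "HOL-Library.Infinite_Set"
begin

definition digitset :: "nat \<Rightarrow> nat set \<Rightarrow> nat set" where
  "digitset b D = {(\<Sum>j\<le>k. d j * b ^ j) | k d. \<forall>j\<le>k. d j \<in> D}"

definition kseq :: "nat \<Rightarrow> nat set \<Rightarrow> nat \<Rightarrow> nat" where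
  "kseq b D n = enumerate (digitset b D) (n - 1)"

end

theory Submission
  imports Defs
begin

lemma card_split:
  fixes a n :: nat
  shows "card {x. x < a*n \<and> P x} = (\<Sum>c<a. card {x. x < n \<and> P (c*n+x)})"
proof (induction a)
  case 0
  then show ?case by simp
next
  case (Suc a)
  have eq: "{x. x < Suc a * n \<and> P x} = {x. x < a*n \<and> P x} \<union> (\<lambda>x. a*n+x) ` {x. x < n \<and> P (a*n+x)}"
  proof (rule set_eqI)
    fix x
    show "x \<in> {x. x < Suc a * n \<and> P x} \<longleftrightarrow> x \<in> {x. x < a*n \<and> P x} \<union> (\<lambda>x. a*n+x) ` {x. x < n \<and> P (a*n+x)}"
    proof (cases "x < a*n")
      case False
      then have "x = a*n + (x - a*n)" by simp
      then show ?thesis using False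
        by (auto simp: image_iff intro!: exI[of _ "x - a*n"])
    qed auto
  qed
  have "card {x. x < Suc a * n \<and> P x} = card {x. x < a*n \<and> P x} + card ((\<lambda>x. a*n+x) ` {x. x < n \<and> P (a*n+x)})"
    unfolding eq by (rule card_Un_disjoint) auto
  also have "card ((\<lambda>x. a*n+x) ` {x. x < n \<and> P (a*n+x)}) = card {x. x < n \<and> P (a*n+x)}"
    by (rule card_image) (auto simp: inj_on_def)
  finally show ?case using Suc by simp
qed

locale dens =
  fixes T B q :: nat and f :: "nat \<Rightarrow> nat"
  assumes T2: "T \<ge> 2" and q1: "q \<ge> 1" and f0: "f 0 = 0"
    and fsplit: "\<And>y x K. x < T^K \<Longrightarrow> f (y*T^K + x) = B^K * f y + f x"
    and idem: "(B*B) mod q = B mod q"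
begin

lemma BK: "K \<ge> 1 \<Longrightarrow> B^K mod q = B mod q"
proof (induction K rule: dec_induct)
  case base
  then show ?case by simp
next
  case (step n)
  have "B^Suc n mod q = (B * (B^n mod q)) mod q" by (simp add: mod_mult_right_eq)
  also have "\<dots> = (B*B) mod q" using step by (simp add: mod_mult_right_eq)
  finally show ?case using idem by simp
qed

lemma BKf: "K \<ge> 1 \<Longrightarrow> (B^K * y) mod q = (B * y) mod q"
  using BK by (metis mod_mult_left_eq)

definition g :: "nat \<Rightarrow> nat \<Rightarrow> real" where
  "g K s = real (card {x. x < T^K \<and> (s + f x) mod q = 0}) / real (T^K)"

definition V :: "nat set" where "V = range (\<lambda>c. (B * f c) mod q)"

lemma Tpos: "T^K > 0" using T2 by simp

lemma g_mod: "g K (s mod q) = g K s"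
  unfolding g_def by (simp add: mod_add_left_eq)

lemma g_nonneg: "0 \<le> g K s" unfolding g_def by simp

lemma g_le1: "g K s \<le> 1"
proof -
  have "card {x. x < T^K \<and> (s + f x) mod q = 0} \<le> card {..<T^K}"
    by (rule card_mono) auto
  then show ?thesis unfolding g_def using Tpos[of K] by simp
qed

lemma g_rec:
  assumes "K \<ge> 1"
  shows "g (K+k) s = (\<Sum>c<T^k. g K (s + B * f c)) / real (T^k)"
proof -
  have "card {x. x < T^(K+k) \<and> (s + f x) mod q = 0}
     = (\<Sum>c<T^k. card {x. x < T^K \<and> (s + f (c*T^K+x)) mod q = 0})"
    using card_split[of "T^k" "T^K" "\<lambda>x. (s + f x) mod q = 0"]
    by (simp add: power_add mult.commute)
  also have "\<dots> = (\<Sum>c<T^k. card {x. x < T^K \<and> (s + B * f c + f x) mod q = 0})"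
  proof (rule sum.cong[OF refl], rule arg_cong[where f=card], rule Collect_cong)
    fix c x
    show "(x < T^K \<and> (s + f (c*T^K+x)) mod q = 0) = (x < T^K \<and> (s + B * f c + f x) mod q = 0)"
    proof (cases "x < T^K")
      case True
      have "(s + f (c*T^K+x)) mod q = ((s + f x) + (B^K * f c)) mod q"
        using fsplit[OF True, of c] by (simp add: add_ac)
      also have "\<dots> = ((s + f x) + (B^K * f c) mod q) mod q"
        by (rule mod_add_right_eq[symmetric])
      also have "\<dots> = (s + f x + (B * f c) mod q) mod q" using BKf[OF assms] by simp
      also have "\<dots> = (s + f x + B * f c) mod q" by (rule mod_add_right_eq)
      also have "\<dots> = (s + B * f c + f x) mod q" by (simp add: add_ac)
      finally show ?thesis by simp
    qed simp
  qed
  finally have "real (card {x. x < T^(K+k) \<and> (s + f x) mod q = 0})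
     = (\<Sum>c<T^k. real (card {x. x < T^K \<and> (s + B * f c + f x) mod q = 0}))"
    by simp
  then show ?thesis unfolding g_def
    by (simp add: power_add sum_divide_distrib field_simps)
qed

lemma n_less_Tpow: "n < T^n"
proof -
  have "n < 2^n" by (rule less_exp)
  also have "(2::nat)^n \<le> T^n" using T2 by (simp add: power_mono)
  finally show ?thesis .
qed

lemma V_sub: "V \<subseteq> {..<q}" unfolding V_def using q1 by auto
lemma V_fin: "finite V" using V_sub finite_subset by blast
lemma V0: "0 \<in> V" unfolding V_def using f0 by (auto intro!: image_eqI[of _ _ 0])
lemma V_ne: "V \<noteq> {}" using V0 by blast
lemma V_in: "(B * f c) mod q \<in> V" unfolding V_def by simp

lemma V_add:
  assumes "v \<in> V" "w \<in> V" shows "(v + w) mod q \<in> V"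
proof -
  obtain c1 c2 where c: "v = (B * f c1) mod q" "w = (B * f c2) mod q"
    using assms unfolding V_def by auto
  define j where "j = Suc c2"
  have lt: "c2 < T^j" unfolding j_def using n_less_Tpow[of "Suc c2"] by simp
  have "f (c1 * T^j + c2) = B^j * f c1 + f c2" by (rule fsplit[OF lt])
  then have "(B * f (c1 * T^j + c2)) mod q = (B^(Suc j) * f c1 + B * f c2) mod q"
    by (simp add: algebra_simps)
  also have "\<dots> = ((B^(Suc j) * f c1) mod q + B * f c2) mod q" by (simp add: mod_add_left_eq)
  also have "\<dots> = ((B * f c1) mod q + B * f c2) mod q" using BKf[of "Suc j" "f c1"] by simp
  also have "\<dots> = (v + w) mod q" using c by (metis mod_add_eq mod_add_left_eq)
  finally show ?thesis using V_in by metis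
qed

lemma shift_image: assumes "s \<in> V" shows "(\<lambda>v. (s + v) mod q) ` V = V"
proof (rule endo_inj_surj[OF V_fin])
  show "(\<lambda>v. (s + v) mod q) ` V \<subseteq> V" using V_add assms by auto
  show "inj_on (\<lambda>v. (s + v) mod q) V"
  proof (rule inj_onI)
    fix v w assume vw: "v \<in> V" "w \<in> V" "(s + v) mod q = (s + w) mod q"
    then have "(int s + int v) mod int q = (int s + int w) mod int q"
      by (metis of_nat_add of_nat_mod)
    then have "((int s + int v) - int s) mod int q = ((int s + int w) - int s) mod int q"
      by (metis mod_diff_left_eq)
    then have "int v mod int q = int w mod int q" by simp
    then have "v mod q = w mod q" by (metis of_nat_eq_iff of_nat_mod)
    then show "v = w" using vw V_sub by (metis lessThan_iff mod_less subsetD)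
  qed
qed

lemma shift_sum: assumes "s \<in> V" shows "(\<Sum>v\<in>V. h ((s + v) mod q)) = (\<Sum>v\<in>V. h v)"
proof -
  have inj: "inj_on (\<lambda>v. (s + v) mod q) V"
    using shift_image[OF assms] V_fin by (simp add: eq_card_imp_inj_on card_image_le)
  have "(\<Sum>v\<in>V. h v) = (\<Sum>v\<in>(\<lambda>v. (s + v) mod q) ` V. h v)" using shift_image[OF assms] by simp
  also have "\<dots> = (\<Sum>v\<in>V. h ((s + v) mod q))" by (rule sum.reindex_cong[OF inj refl]) simp
  finally show ?thesis by simp
qed

definition Mx where "Mx K = Max (g K ` V)"
definition Mn where "Mn K = Min (g K ` V)"
definition S where "S K = (\<Sum>v\<in>V. g K v)"

lemma Mx_ge: "v \<in> V \<Longrightarrow> g K v \<le> Mx K" unfolding Mx_def using V_fin by simp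
lemma Mn_le: "v \<in> V \<Longrightarrow> Mn K \<le> g K v" unfolding Mn_def using V_fin by simp
lemma Mx_in: "\<exists>v\<in>V. Mx K = g K v"
proof -
  have "Max (g K ` V) \<in> g K ` V" by (rule Max_in) (use V_fin V_ne in auto)
  then show ?thesis unfolding Mx_def by blast
qed
lemma Mn_in: "\<exists>v\<in>V. Mn K = g K v"
proof -
  have "Min (g K ` V) \<in> g K ` V" by (rule Min_in) (use V_fin V_ne in auto)
  then show ?thesis unfolding Mn_def by blast
qed
lemma Mn_Mx: "Mn K \<le> Mx K" using Mn_le[OF V0] Mx_ge[OF V0] by (rule order_trans)

lemma rec_V:
  assumes "K \<ge> 1" "s \<in> V"
  shows "g (K+k) s = (\<Sum>c<T^k. g K ((s + B * f c) mod q)) / real (T^k)"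
    and "(s + B * f c) mod q \<in> V"
proof -
  show "g (K+k) s = (\<Sum>c<T^k. g K ((s + B * f c) mod q)) / real (T^k)"
    using g_rec[OF assms(1)] by (simp add: g_mod)
  have "(s + B * f c) mod q = (s + (B * f c) mod q) mod q" by (simp add: mod_add_right_eq)
  then show "(s + B * f c) mod q \<in> V" using V_add[OF assms(2) V_in] by simp
qed

lemma g_between:
  assumes "K \<ge> 1" "s \<in> V"
  shows "Mn K \<le> g (K+k) s" "g (K+k) s \<le> Mx K"
proof -
  have Tk: "real (T^k) > 0" using Tpos by simp
  have "(\<Sum>c<T^k. g K ((s + B * f c) mod q)) \<le> of_nat (card {..<T^k}) * Mx K"
    by (rule sum_bounded_above) (use rec_V(2)[OF assms] Mx_ge in auto)
  then show "g (K+k) s \<le> Mx K" unfolding rec_V(1)[OF assms] using Tk by (simp add: field_simps)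
  have "of_nat (card {..<T^k}) * Mn K \<le> (\<Sum>c<T^k. g K ((s + B * f c) mod q))"
    by (rule sum_bounded_below) (use rec_V(2)[OF assms] Mn_le in auto)
  then show "Mn K \<le> g (K+k) s" unfolding rec_V(1)[OF assms] using Tk by (simp add: field_simps)
qed

lemma Mx_mono: "K \<ge> 1 \<Longrightarrow> Mx (K+k) \<le> Mx K"
  using Mx_in[of "K+k"] g_between by force
lemma Mn_mono: "K \<ge> 1 \<Longrightarrow> Mn K \<le> Mn (K+k)"
  using Mn_in[of "K+k"] g_between by force

lemma S_const: assumes "K \<ge> 1" shows "S (K+k) = S K"
proof -
  have Tk: "real (T^k) > 0" using Tpos by simp
  have "S (K+k) = (\<Sum>v\<in>V. (\<Sum>c<T^k. g K ((v + B * f c) mod q)) / real (T^k))"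
    unfolding S_def by (rule sum.cong[OF refl]) (rule rec_V(1)[OF assms])
  also have "\<dots> = (\<Sum>c<T^k. (\<Sum>v\<in>V. g K ((v + B * f c) mod q))) / real (T^k)"
    by (simp add: sum_divide_distrib[symmetric] sum.swap[of _ V])
  also have "\<dots> = (\<Sum>c<T^k. S K) / real (T^k)"
  proof -
    have "(\<Sum>v\<in>V. g K ((v + B * f c) mod q)) = S K" for c
    proof -
      have "(\<Sum>v\<in>V. g K ((v + B * f c) mod q)) = (\<Sum>v\<in>V. g K (((B * f c) mod q + v) mod q))"
        by (rule sum.cong[OF refl]) (metis add.commute mod_add_right_eq)
      also have "\<dots> = S K" unfolding S_def by (rule shift_sum[OF V_in])
      finally show ?thesis .
    qed
    then show ?thesis by simp
  qed
  also have "\<dots> = S K" using Tk by simp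
  finally show ?thesis .
qed

lemma S1: "S 1 \<ge> 1 / real T"
proof -
  have fin: "finite {x. x < T^1 \<and> (0 + f x) mod q = 0}" by auto
  have "0 \<in> {x. x < T^1 \<and> (0 + f x) mod q = 0}" using T2 f0 by auto
  then have "1 \<le> card {x. x < T^1 \<and> (0 + f x) mod q = 0}"
    using fin by (metis card_gt_0_iff empty_iff Suc_le_eq One_nat_def)
  then have "g 1 0 \<ge> 1 / real T" unfolding g_def using T2 by (simp add: divide_right_mono)
  also have "g 1 0 \<le> S 1" unfolding S_def by (rule member_le_sum[OF V0]) (auto simp: g_nonneg V_fin)
  finally show ?thesis .
qed

lemma S_le: "S K \<le> real (card V) * Mx K"
  unfolding S_def by (rule sum_bounded_above) (use Mx_ge in auto)

definition rep where "rep v = (SOME c. (B * f c) mod q = v)"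
definition k0 where "k0 = Suc (Max (rep ` V))"

lemma rep: "v \<in> V \<Longrightarrow> (B * f (rep v)) mod q = v"
  unfolding rep_def V_def by (rule someI_ex) auto

lemma rep_lt: "v \<in> V \<Longrightarrow> rep v < T^k0"
proof -
  assume v: "v \<in> V"
  have "rep v \<le> Max (rep ` V)" using v V_fin by simp
  then have "rep v < k0" unfolding k0_def by simp
  then show ?thesis using n_less_Tpow[of k0] by simp
qed

lemma inj_rep: "inj_on rep V" by (metis inj_onI rep)

lemma cardV: "card V \<le> T^k0" "card V \<ge> 1"
proof -
  have "card (rep ` V) \<le> card {..<(T^k0)}" by (rule card_mono) (use rep_lt in auto)
  then show "card V \<le> T^k0" using card_image[OF inj_rep] by simp
  show "card V \<ge> 1" using V_fin V0 by (metis card_gt_0_iff empty_iff Suc_le_eq One_nat_def)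
qed

lemma doeblin:
  assumes "K \<ge> 1" "s \<in> V"
  shows "real (T^k0) * g (K+k0) s \<le> S K + (real (T^k0) - real (card V)) * Mx K"
    and "S K + (real (T^k0) - real (card V)) * Mn K \<le> real (T^k0) * g (K+k0) s"
proof -
  define F where "F c = g K ((s + B * f c) mod q)" for c
  have Tk: "real (T^k0) > 0" using Tpos by simp
  have eq1: "real (T^k0) * g (K+k0) s = (\<Sum>c<T^k0. F c)"
    unfolding rec_V(1)[OF assms] F_def using Tk by simp
  have sub: "rep ` V \<subseteq> {..<T^k0}" using rep_lt by auto
  have split: "(\<Sum>c<T^k0. F c) = (\<Sum>c\<in>{..<T^k0} - rep ` V. F c) + (\<Sum>c\<in>rep ` V. F c)"
    by (rule sum.subset_diff[OF sub]) simp
  have "(\<Sum>c\<in>rep ` V. F c) = (\<Sum>v\<in>V. F (rep v))" by (rule sum.reindex[OF inj_rep, unfolded comp_def])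
  also have "\<dots> = (\<Sum>v\<in>V. g K ((s + v) mod q))"
  proof (rule sum.cong[OF refl])
    fix v assume v: "v \<in> V"
    have "(s + B * f (rep v)) mod q = (s + (B * f (rep v)) mod q) mod q" by (simp add: mod_add_right_eq)
    then show "F (rep v) = g K ((s + v) mod q)" unfolding F_def using rep[OF v] by simp
  qed
  also have "\<dots> = S K" unfolding S_def by (rule shift_sum[OF assms(2)])
  finally have RS: "(\<Sum>c\<in>rep ` V. F c) = S K" .
  have cd: "card ({..<T^k0} - rep ` V) = T^k0 - card V"
    using card_Diff_subset[OF _ sub] card_image[OF inj_rep] V_fin by simp
  have rcd: "real (card ({..<T^k0} - rep ` V)) = real (T^k0) - real (card V)"
    using cd cardV(1) by simp
  have "(\<Sum>c\<in>{..<T^k0} - rep ` V. F c) \<le> real (card ({..<T^k0} - rep ` V)) * Mx K"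
    by (rule sum_bounded_above) (use rec_V(2)[OF assms] Mx_ge in \<open>auto simp: F_def\<close>)
  then show "real (T^k0) * g (K+k0) s \<le> S K + (real (T^k0) - real (card V)) * Mx K"
    using eq1 split RS rcd by simp
  have "real (card ({..<T^k0} - rep ` V)) * Mn K \<le> (\<Sum>c\<in>{..<T^k0} - rep ` V. F c)"
    by (rule sum_bounded_below) (use rec_V(2)[OF assms] Mn_le in \<open>auto simp: F_def\<close>)
  then show "S K + (real (T^k0) - real (card V)) * Mn K \<le> real (T^k0) * g (K+k0) s"
    using eq1 split RS rcd by simp
qed

definition rho where "rho = 1 - real (card V) / real (T^k0)"

lemma rho: "0 \<le> rho" "rho < 1"
proof -
  have Tk: "real (T^k0) > 0" using Tpos by simp
  show "0 \<le> rho" unfolding rho_def using cardV(1) Tk by (simp add: field_simps)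
  show "rho < 1" unfolding rho_def using cardV(2) Tk by (simp add: field_simps)
qed

lemma osc_step:
  assumes "K \<ge> 1" shows "Mx (K+k0) - Mn (K+k0) \<le> rho * (Mx K - Mn K)"
proof -
  have Tk: "real (T^k0) > 0" using Tpos by simp
  obtain s1 where s1: "s1 \<in> V" "Mx (K+k0) = g (K+k0) s1" using Mx_in by blast
  obtain s2 where s2: "s2 \<in> V" "Mn (K+k0) = g (K+k0) s2" using Mn_in by blast
  have "real (T^k0) * (Mx (K+k0) - Mn (K+k0)) \<le> (real (T^k0) - real (card V)) * (Mx K - Mn K)"
    using doeblin(1)[OF assms s1(1)] doeblin(2)[OF assms s2(1)] s1(2) s2(2)
    by (simp add: algebra_simps)
  then have "Mx (K+k0) - Mn (K+k0) \<le> (real (T^k0) - real (card V)) * (Mx K - Mn K) / real (T^k0)"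
    using Tk by (simp add: field_simps)
  also have "\<dots> = rho * (Mx K - Mn K)" unfolding rho_def using Tk by (simp add: field_simps)
  finally show ?thesis .
qed

lemma Mx_le1: "Mx K \<le> 1" using Mx_in g_le1 by metis
lemma Mn_ge0: "0 \<le> Mn K" using Mn_in g_nonneg by metis

lemma osc_iter: "Mx (1 + n*k0) - Mn (1 + n*k0) \<le> rho ^ n"
proof (induction n)
  case 0
  then show ?case using Mx_le1[of 1] Mn_ge0[of 1] by simp
next
  case (Suc n)
  have "Mx (1 + Suc n*k0) - Mn (1 + Suc n*k0) = Mx ((1 + n*k0) + k0) - Mn ((1 + n*k0) + k0)"
    by (simp add: add_ac)
  also have "\<dots> \<le> rho * (Mx (1 + n*k0) - Mn (1 + n*k0))" by (rule osc_step) simp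
  also have "\<dots> \<le> rho * rho ^ n" using Suc rho(1) by (rule mult_left_mono)
  finally show ?case by simp
qed

definition delta where "delta = Inf (Mx ` {1..})"

lemma bdd: "bdd_below (Mx ` {1..})"
  by (rule bdd_belowI[of _ 0]) (use Mn_ge0 Mn_Mx order_trans in blast)

lemma delta_le: "K \<ge> 1 \<Longrightarrow> delta \<le> Mx K"
  unfolding delta_def by (rule cInf_lower[OF _ bdd]) simp

lemma Mn_le_delta: assumes "K \<ge> 1" shows "Mn K \<le> delta"
  unfolding delta_def
proof (rule cInf_greatest)
  show "Mx ` {1..} \<noteq> {}" by simp
  fix x assume "x \<in> Mx ` {1..}"
  then obtain K' where K': "K' \<ge> 1" "x = Mx K'" by auto
  show "Mn K \<le> x"
  proof (cases "K \<le> K'")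
    case True
    then have "Mn K \<le> Mn (K + (K' - K))" by (intro Mn_mono assms)
    then show ?thesis using True K' Mn_Mx[of K'] by simp
  next
    case False
    then have "Mx (K' + (K - K')) \<le> Mx K'" by (intro Mx_mono K')
    then show ?thesis using False K' Mn_Mx[of K] by simp
  qed
qed

lemma delta_pos: "delta > 0"
proof -
  have cV: "real (card V) > 0" using cardV(2) by simp
  have T0: "real T > 0" using T2 by simp
  have "1 / (real T * real (card V)) \<le> delta"
    unfolding delta_def
  proof (rule cInf_greatest)
    show "Mx ` {1..} \<noteq> {}" by simp
    fix x assume "x \<in> Mx ` {1..}"
    then obtain K where K: "K \<ge> 1" "x = Mx K" by auto
    have "S K = S (1 + (K - 1))" using K by simp
    also have "\<dots> = S 1" by (rule S_const) simp
    finally have "1 / real T \<le> real (card V) * Mx K" using S1 S_le[of K] by simp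
    then show "1 / (real T * real (card V)) \<le> x" using K cV T0 by (simp add: field_simps)
  qed
  moreover have "1 / (real T * real (card V)) > 0" using cV T0 by simp
  ultimately show ?thesis by linarith
qed

lemma delta_le1: "delta \<le> 1" using delta_le[of 1] Mx_le1[of 1] by simp

definition A where "A N = card {n. n < N \<and> f n mod q = 0}"

lemma block:
  assumes "K \<ge> 1"
  shows "real (card {x. x < T^K \<and> f (c*T^K + x) mod q = 0}) = real (T^K) * g K ((B * f c) mod q)"
proof -
  have "{x. x < T^K \<and> f (c*T^K + x) mod q = 0} = {x. x < T^K \<and> ((B * f c) mod q + f x) mod q = 0}"
  proof (rule Collect_cong)
    fix x
    show "(x < T^K \<and> f (c*T^K + x) mod q = 0) = (x < T^K \<and> ((B * f c) mod q + f x) mod q = 0)"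
    proof (cases "x < T^K")
      case True
      have "f (c*T^K + x) mod q = (B^K * f c + f x) mod q" using fsplit[OF True] by simp
      also have "\<dots> = ((B^K * f c) mod q + f x) mod q" by (simp add: mod_add_left_eq)
      also have "\<dots> = ((B * f c) mod q + f x) mod q" using BKf[OF assms] by simp
      finally show ?thesis by simp
    qed simp
  qed
  then show ?thesis unfolding g_def using Tpos[of K] by simp
qed

lemma A_block: "A (Q * T^K) = (\<Sum>c<Q. card {x. x < T^K \<and> f (c*T^K + x) mod q = 0})"
  unfolding A_def by (rule card_split)

lemma A_diff: assumes "M \<le> N" shows "A M \<le> A N" "A N \<le> A M + (N - M)"
proof -
  show "A M \<le> A N" unfolding A_def by (rule card_mono) (use assms in auto)
  have "{n. n < N \<and> f n mod q = 0} \<subseteq> {n. n < M \<and> f n mod q = 0} \<union> {M..<N}" by auto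
  then have "A N \<le> card ({n. n < M \<and> f n mod q = 0} \<union> {M..<N})" unfolding A_def
    by (rule card_mono[rotated]) auto
  also have "\<dots> \<le> A M + card {M..<N}" unfolding A_def by (rule card_Un_le)
  finally show "A N \<le> A M + (N - M)" by simp
qed

lemma density: "(\<lambda>N. real (A N) / real N) \<longlonglongrightarrow> delta"
proof (rule LIMSEQ_I)
  fix r :: real assume r: "0 < r"
  define e where "e = r / 3"
  have e: "e > 0" unfolding e_def using r by simp
  have "(\<lambda>n. rho ^ n) \<longlonglongrightarrow> 0" by (rule LIMSEQ_realpow_zero[OF rho])
  from LIMSEQ_D[OF this e] obtain n0 where "\<forall>m\<ge>n0. norm (rho ^ m - 0) < e" by blast
  then have "norm (rho ^ n0 - 0) < e" by simp
  then obtain n where n: "rho ^ n < e" using rho(1) by auto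
  define K where "K = 1 + n * k0"
  have K1: "K \<ge> 1" unfolding K_def by simp
  have osc: "Mx K - Mn K < e" using osc_iter[of n] n unfolding K_def by simp
  have close: "\<bar>g K v - delta\<bar> < e" if "v \<in> V" for v
    using Mx_ge[OF that, of K] Mn_le[OF that, of K] delta_le[OF K1] Mn_le_delta[OF K1] osc by linarith
  define TK where "TK = T^K"
  have TK: "TK > 0" unfolding TK_def using Tpos by simp
  define N0 where "N0 = nat (ceiling (2 * real TK / e)) + 1"
  show "\<exists>no. \<forall>N\<ge>no. norm (real (A N) / real N - delta) < r"
  proof (intro exI allI impI)
    fix N assume N: "N \<ge> N0"
    have Npos: "real N > 0" using N unfolding N0_def by simp
    have "2 * real TK / e \<le> real (nat (ceiling (2 * real TK / e)))" by linarith
    then have "2 * real TK / e < real N" using N unfolding N0_def by linarith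
    then have NTK: "2 * real TK / real N < e" using Npos e by (simp add: field_simps)
    define Q where "Q = N div TK"
    define M where "M = Q * TK"
    have MN: "M \<le> N" unfolding M_def Q_def by simp
    have "N - M = N mod TK" unfolding M_def Q_def by (rule minus_div_mult_eq_mod)
    then have NM: "N - M < TK" using TK by simp
    have AM: "real (A M) = (\<Sum>c<Q. real TK * g K ((B * f c) mod q))"
      unfolding M_def TK_def A_block using block[OF K1] by simp
    have "\<bar>real (A M) - real M * delta\<bar> = \<bar>\<Sum>c<Q. real TK * (g K ((B * f c) mod q) - delta)\<bar>"
      by (subst AM) (simp add: M_def algebra_simps sum_subtractf sum_distrib_left)
    also have "\<dots> \<le> (\<Sum>c<Q. \<bar>real TK * (g K ((B * f c) mod q) - delta)\<bar>)" by (rule sum_abs)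
    also have "\<dots> \<le> (\<Sum>c<Q. real TK * e)"
    proof (rule sum_mono)
      fix c
      have "\<bar>g K ((B * f c) mod q) - delta\<bar> \<le> e" using close[OF V_in, of c] by simp
      then show "\<bar>real TK * (g K ((B * f c) mod q) - delta)\<bar> \<le> real TK * e"
        using TK by (simp add: abs_mult)
    qed
    also have "\<dots> = real M * e" unfolding M_def by simp
    also have "\<dots> \<le> real N * e" using MN e by simp
    finally have b1: "\<bar>real (A M) - real M * delta\<bar> \<le> real N * e" .
    have b2: "\<bar>real (A N) - real (A M)\<bar> \<le> real TK"
      using A_diff[OF MN] NM by linarith
    have b3: "\<bar>real M * delta - real N * delta\<bar> \<le> real TK"
    proof -
      have "\<bar>real M * delta - real N * delta\<bar> = (real N - real M) * delta"
        using MN delta_pos by (simp add: abs_if algebra_simps)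
      also have "\<dots> \<le> (real N - real M) * 1" using delta_le1 MN by (intro mult_left_mono) auto
      moreover have "real (N - M) < real TK" using NM by linarith
      ultimately show ?thesis using MN by (simp add: of_nat_diff)
    qed
    have "\<bar>real (A N) - real N * delta\<bar> \<le> real N * e + 2 * real TK" using b1 b2 b3 by linarith
    then have ab: "\<bar>real (A N) - real N * delta\<bar> / real N \<le> (real N * e + 2 * real TK) / real N"
      by (rule divide_right_mono) (use Npos in simp)
    have "real (A N) / real N - delta = (real (A N) - real N * delta) / real N"
      using Npos by (simp add: field_simps)
    then have "\<bar>real (A N) / real N - delta\<bar> = \<bar>real (A N) - real N * delta\<bar> / real N"
      using Npos by simp
    also have "\<dots> \<le> (real N * e + 2 * real TK) / real N" by (rule ab)
    also have "\<dots> = e + 2 * real TK / real N" using Npos by (simp add: field_simps)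
    also have "\<dots> < r" using NTK r e_def by linarith
    finally show "norm (real (A N) / real N - delta) < r" by simp
  qed
qed

end

lemma enumerate_strict_mono:
  fixes h :: "nat \<Rightarrow> nat"
  assumes "strict_mono h" shows "enumerate (range h) n = h n"
  using assms
proof (induction n arbitrary: h)
  case 0
  have "(LEAST x. x \<in> range h) = h 0"
  proof (rule Least_equality)
    show "h 0 \<in> range h" by simp
    fix y assume "y \<in> range h"
    then obtain k where "y = h k" by auto
    then show "h 0 \<le> y" using 0 by (simp add: strict_mono_less_eq)
  qed
  then show ?case by (simp add: enumerate_0)
next
  case (Suc n)
  have L: "(LEAST x. x \<in> range h) = h 0"
  proof (rule Least_equality)
    show "h 0 \<in> range h" by simp
    fix y assume "y \<in> range h"
    then obtain k where "y = h k" by auto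
    then show "h 0 \<le> y" using Suc.prems by (simp add: strict_mono_less_eq)
  qed
  have R: "range h - {h 0} = range (h \<circ> Suc)"
  proof
    show "range h - {h 0} \<subseteq> range (h \<circ> Suc)"
    proof
      fix y assume "y \<in> range h - {h 0}"
      then obtain k where k: "y = h k" "k \<noteq> 0" by auto
      then obtain j where "k = Suc j" using not0_implies_Suc by blast
      then show "y \<in> range (h \<circ> Suc)" using k by auto
    qed
    show "range (h \<circ> Suc) \<subseteq> range h - {h 0}"
      using Suc.prems by (auto simp: strict_mono_eq)
  qed
  have sm: "strict_mono (h \<circ> Suc)" using Suc.prems by (simp add: strict_mono_def)
  show ?case using Suc.IH[OF sm] L R by (simp add: enumerate_Suc)
qed

function phi :: "nat \<Rightarrow> nat \<Rightarrow> (nat \<Rightarrow> nat) \<Rightarrow> nat \<Rightarrow> nat" where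
  "phi m b dd n = (if n = 0 \<or> m < 2 then 0 else dd (n mod m) + b * phi m b dd (n div m))"
  by auto
termination by (relation "Wellfounded.measure (\<lambda>(m,b,dd,n). n)") auto

declare phi.simps[simp del]

lemma phi0: "phi m b dd 0 = 0" by (simp add: phi.simps)

lemma phi_rec:
  assumes "m \<ge> 2" "a < m" "dd 0 = 0"
  shows "phi m b dd (m*n + a) = b * phi m b dd n + dd a"
proof (cases "m*n + a = 0")
  case True
  then have "n = 0" "a = 0" using assms by auto
  then show ?thesis using assms by (simp add: phi0)
next
  case False
  have "phi m b dd (m*n+a) = dd ((m*n+a) mod m) + b * phi m b dd ((m*n+a) div m)"
    using False assms by (subst phi.simps) (simp add: phi0)
  then show ?thesis using assms by simp
qed

lemma phi_split:
  assumes "m \<ge> 2" "dd 0 = 0"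
  shows "x < m^L \<Longrightarrow> phi m b dd (y*m^L + x) = b^L * phi m b dd y + phi m b dd x"
proof (induction L arbitrary: x)
  case 0
  then show ?case by (simp add: phi0)
next
  case (Suc L)
  have m0: "m > 0" using assms by simp
  have xd: "x div m < m^L" using Suc.prems m0 by (simp add: div_less_iff_less_mult mult.commute)
  have xm: "x mod m < m" using m0 by simp
  have e1: "y*m^Suc L + x = m*(y*m^L + x div m) + x mod m"
    by (simp add: algebra_simps)
  have e2: "x = m*(x div m) + x mod m" by simp
  have "phi m b dd (y*m^Suc L + x) = b * phi m b dd (y*m^L + x div m) + dd (x mod m)"
    unfolding e1 by (rule phi_rec[where m=m and dd=dd and a="x mod m" and n="y*m^L + x div m" and b=b, OF assms(1) xm assms(2)])
  also have "\<dots> = b^Suc L * phi m b dd y + (b * phi m b dd (x div m) + dd (x mod m))"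
    using Suc.IH[OF xd] by (simp add: algebra_simps)
  also have "b * phi m b dd (x div m) + dd (x mod m) = phi m b dd x"
    using phi_rec[where m=m and dd=dd and a="x mod m" and n="x div m" and b=b, OF assms(1) xm assms(2)] e2 by simp
  finally show ?case .
qed

lemma idem_exists:
  fixes b q :: nat assumes "q \<ge> 1"
  shows "\<exists>e\<ge>1. (b^e * b^e) mod q = b^e mod q"
proof -
  have "\<not> inj_on (\<lambda>j. b^j mod q) {..q}"
  proof
    assume inj: "inj_on (\<lambda>j. b^j mod q) {..q}"
    have "card {..q} \<le> card {..<q}"
      by (rule card_inj_on_le[OF inj]) (use assms in auto)
    then show False by simp
  qed
  then obtain i j where ij: "i \<noteq> j" "b^i mod q = b^j mod q" unfolding inj_on_def by auto
  obtain i j where ij: "i < j" "b^i mod q = b^j mod q"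
    using ij by (metis linorder_neqE_nat)
  define t where "t = j - i"
  have per: "b^(x + t) mod q = b^x mod q" if "x \<ge> i" for x
  proof -
    have "b^(x + t) = b^(x - i) * b^j" using that ij unfolding t_def by (simp add: power_add[symmetric])
    then have "b^(x + t) mod q = (b^(x - i) * (b^j mod q)) mod q" by (simp add: mod_mult_right_eq)
    also have "\<dots> = (b^(x - i) * (b^i mod q)) mod q" using ij by simp
    also have "\<dots> = (b^(x - i) * b^i) mod q" by (simp add: mod_mult_right_eq)
    also have "\<dots> = b^x mod q" using that by (simp add: power_add[symmetric])
    finally show ?thesis .
  qed
  have perk: "b^(x + k*t) mod q = b^x mod q" if "x \<ge> i" for x k
  proof (induction k)
    case (Suc k)
    have "b^(x + Suc k * t) mod q = b^((x + k*t) + t) mod q" by (simp add: algebra_simps)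
    also have "\<dots> = b^(x + k*t) mod q" by (rule per) (use that in simp)
    finally show ?case using Suc by simp
  qed simp
  define e where "e = (i+1) * t"
  have t1: "t \<ge> 1" unfolding t_def using ij by simp
  have "i*1 \<le> i*t" using t1 by (rule mult_le_mono2)
  moreover have "e = t + i*t" unfolding e_def by simp
  ultimately have ei: "e \<ge> i + 1" using t1 by linarith
  have "(b^e * b^e) mod q = b^(e + (i+1)*t) mod q" by (simp add: e_def power_add)
  also have "\<dots> = b^e mod q" by (rule perk) (use ei in simp)
  finally show ?thesis using ei by (intro exI[of _ e]) simp
qed

theorem mainTheorem10:
  fixes b q :: nat and D :: "nat set"
  assumes "b \<ge> 3"
    and "D \<subseteq> {0..<b}"
    and "0 \<in> D"
    and "2 \<le> card D"
    and "card D < b"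
    and "q \<ge> 1"
  shows "\<exists>L::real. L > 0 \<and>
    (\<lambda>N. real (card {n \<in> {1..N}. q dvd kseq b D n}) / real N) \<longlonglongrightarrow> L"
proof -
  define xs where "xs = sorted_list_of_set D"
  define m where "m = card D"
  define dd where "dd i = xs ! i" for i
  have finD: "finite D" using assms(2) finite_subset by blast
  have len: "length xs = m" unfolding xs_def m_def by simp
  have setxs: "set xs = D" unfolding xs_def using finD by simp
  have sxs: "sorted_wrt (<) xs" unfolding xs_def by simp
  have m2: "m \<ge> 2" unfolding m_def using assms(4) .
  have dd_mono: "dd i < dd j" if "i < j" "j < m" for i j
    unfolding dd_def using sorted_wrt_nth_less[OF sxs that(1)] that len by simp
  have dd_in: "dd i \<in> D" if "i < m" for i
    unfolding dd_def using that len setxs nth_mem by metis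
  have dd_lt: "dd i < b" if "i < m" for i using dd_in[OF that] assms(2) by auto
  have dd_surj: "\<exists>i<m. dd i = d" if "d \<in> D" for d
    using that setxs len unfolding dd_def by (metis in_set_conv_nth)
  have dd0: "dd 0 = 0"
  proof -
    obtain j where j: "j < m" "dd j = 0" using dd_surj[OF assms(3)] by blast
    show ?thesis
    proof (cases "j = 0")
      case False
      then have "dd 0 < dd j" using dd_mono[of 0 j] j by simp
      then show ?thesis using j by simp
    qed (use j in simp)
  qed
  define \<phi> where "\<phi> = phi m b dd"
  have rec: "\<phi> (m*n + a) = b * \<phi> n + dd a" if "a < m" for n a
    unfolding \<phi>_def by (rule phi_rec[where m=m and dd=dd and a=a, OF m2 that dd0])
  have \<phi>0: "\<phi> 0 = 0" unfolding \<phi>_def by (rule phi0)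
  have step: "\<phi> n < \<phi> (Suc n)" for n
  proof (induction n rule: less_induct)
    case (less n)
    have m0: "m > 0" using m2 by simp
    have nm: "n = m * (n div m) + n mod m" by simp
    have nmod: "n mod m < m" using m0 by simp
    show ?case
    proof (cases "n mod m + 1 < m")
      case True
      have eqS: "Suc n = m * (n div m) + (n mod m + 1)" using nm by simp
      have "\<phi> (Suc n) = b * \<phi> (n div m) + dd (n mod m + 1)" unfolding eqS by (rule rec[OF True])
      moreover have "\<phi> n = b * \<phi> (n div m) + dd (n mod m)" using rec[OF nmod] nm by metis
      moreover have "dd (n mod m) < dd (n mod m + 1)" using dd_mono True by simp
      ultimately show ?thesis by simp
    next
      case False
      then have nm1: "n mod m = m - 1" using nmod by simp
      have npos: "n > 0"
      proof (rule ccontr)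
        assume "\<not> n > 0"
        then have "n = 0" by simp
        then show False using nm1 m2 by simp
      qed
      then have lt: "n div m < n" using m2 by simp
      have eqS: "Suc n = m * Suc (n div m) + 0" using nm nm1 m0 by (simp add: algebra_simps)
      have "\<phi> (Suc n) = b * \<phi> (Suc (n div m)) + dd 0" unfolding eqS by (rule rec[OF m0])
      also have "\<dots> = b * \<phi> (Suc (n div m))" using dd0 by simp
      also have "\<dots> \<ge> b * (\<phi> (n div m) + 1)"
      proof -
        have "\<phi> (n div m) + 1 \<le> \<phi> (Suc (n div m))" using less.IH[OF lt] by simp
        then show ?thesis by (rule mult_le_mono2)
      qed
      finally have A1: "\<phi> (Suc n) \<ge> b * \<phi> (n div m) + b" by (simp add: algebra_simps)
      have "\<phi> n = b * \<phi> (n div m) + dd (n mod m)" using rec[OF nmod] nm by metis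
      moreover have "dd (n mod m) < b" using dd_lt[OF nmod] .
      ultimately show ?thesis using A1 by simp
    qed
  qed
  have smono: "strict_mono \<phi>" using step by (simp add: strict_mono_Suc_iff)
  have range_sub: "\<phi> n \<in> digitset b D" for n
  proof (induction n rule: less_induct)
    case (less n)
    show ?case
    proof (cases "n = 0")
      case True
      then show ?thesis unfolding digitset_def using \<phi>0 assms(3)
        by (auto intro!: exI[of _ 0] exI[of _ "\<lambda>_. 0"])
    next
      case False
      then have lt: "n div m < n" using m2 by simp
      obtain k d where kd: "\<phi> (n div m) = (\<Sum>j\<le>k. d j * b^j)" "\<forall>j\<le>k. d j \<in> D"
        using less.IH[OF lt] unfolding digitset_def by auto
      have nmod: "n mod m < m" using m2 by simp
      define d' where "d' j = (if j = 0 then dd (n mod m) else d (j - 1))" for j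
      have "\<phi> n = b * \<phi> (n div m) + dd (n mod m)" using rec[OF nmod, of "n div m"] by simp
      also have "\<dots> = (\<Sum>j\<le>Suc k. d' j * b^j)"
        unfolding sum.atMost_Suc_shift d'_def kd(1) by (simp add: sum_distrib_left algebra_simps)
      finally have "\<phi> n = (\<Sum>j\<le>Suc k. d' j * b^j)" .
      moreover have "\<forall>j\<le>Suc k. d' j \<in> D" unfolding d'_def using kd(2) dd_in[OF nmod] by auto
      ultimately show ?thesis unfolding digitset_def by blast
    qed
  qed
  have range_sup: "\<forall>d. (\<forall>j\<le>k. d j \<in> D) \<longrightarrow> (\<Sum>j\<le>k. d j * b^j) \<in> range \<phi>" for k
  proof (induction k)
    case 0
    show ?case
    proof (intro allI impI)
      fix d :: "nat \<Rightarrow> nat" assume "\<forall>j\<le>0. d j \<in> D"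
      then obtain i where i: "i < m" "dd i = d 0" using dd_surj by auto
      have "\<phi> (m*0 + i) = d 0" using rec[OF i(1), of 0] \<phi>0 i by simp
      then show "(\<Sum>j\<le>0. d j * b^j) \<in> range \<phi>" 
      proof -
        have "(\<Sum>j\<le>0. d j * b^j) = d 0" by simp
        then show ?thesis using \<open>\<phi> (m*0 + i) = d 0\<close> by (metis rangeI)
      qed
    qed
  next
    case (Suc k)
    show ?case
    proof (intro allI impI)
      fix d :: "nat \<Rightarrow> nat" assume d: "\<forall>j\<le>Suc k. d j \<in> D"
      then have "\<forall>j\<le>k. d (Suc j) \<in> D" by auto
      then have "(\<Sum>j\<le>k. d (Suc j) * b^j) \<in> range \<phi>" using Suc.IH[rule_format, of "\<lambda>j. d (Suc j)"] by blast
      then obtain n where n: "\<phi> n = (\<Sum>j\<le>k. d (Suc j) * b^j)" by (metis rangeE)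
      obtain i where i: "i < m" "dd i = d 0" using dd_surj d by auto
      have "\<phi> (m*n + i) = b * \<phi> n + d 0" using rec[OF i(1)] i by simp
      also have "\<dots> = (\<Sum>j\<le>Suc k. d j * b^j)"
        unfolding sum.atMost_Suc_shift n by (simp add: sum_distrib_left algebra_simps)
      finally show "(\<Sum>j\<le>Suc k. d j * b^j) \<in> range \<phi>" by (metis rangeI)
    qed
  qed
  have rng: "range \<phi> = digitset b D"
    using range_sub range_sup unfolding digitset_def by blast
  have kseq: "kseq b D n = \<phi> (n - 1)" for n
    unfolding kseq_def rng[symmetric] by (rule enumerate_strict_mono[OF smono])
  obtain e where e: "e \<ge> 1" "(b^e * b^e) mod q = b^e mod q" using idem_exists[OF assms(6)] by blast
  have T2: "m^e \<ge> 2"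
  proof -
    have "m^1 \<le> m^e" using e(1) m2 by (intro power_increasing) auto
    then show ?thesis using m2 by simp
  qed
  interpret dens "m^e" "b^e" q \<phi>
  proof
    show "m^e \<ge> 2" by (rule T2)
    show "q \<ge> 1" by (rule assms(6))
    show "\<phi> 0 = 0" by (rule \<phi>0)
    show "(b^e * b^e) mod q = b^e mod q" by (rule e(2))
    fix y x K assume "x < (m^e)^K"
    then have "x < m^(e*K)" by (simp add: power_mult)
    from phi_split[where m=m and dd=dd and L="e*K" and x=x and b=b and y=y, OF m2 dd0 this]
    show "\<phi> (y * (m^e)^K + x) = (b^e)^K * \<phi> y + \<phi> x" unfolding \<phi>_def by (simp add: power_mult)
  qed
  have cardeq: "card {n \<in> {1..N}. q dvd kseq b D n} = A N" for N
  proof -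
    have "{n \<in> {1..N}. q dvd kseq b D n} = Suc ` {n. n < N \<and> \<phi> n mod q = 0}"
    proof (rule set_eqI)
      fix x
      show "x \<in> {n \<in> {1..N}. q dvd kseq b D n} \<longleftrightarrow> x \<in> Suc ` {n. n < N \<and> \<phi> n mod q = 0}"
      proof (cases x)
        case 0
        then show ?thesis by auto
      next
        case (Suc y)
        then show ?thesis by (auto simp: kseq dvd_eq_mod_eq_0)
      qed
    qed
    then show ?thesis unfolding A_def by (simp add: card_image)
  qed
  show ?thesis using density delta_pos unfolding cardeq by blast
qed

end
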